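(* Let $P$ be a convex polygon. (1) Every locally maximal parallelogram in $P$ is inscribed. (2) For any inscribed slidable parallelogram in $P$, there is an inscribed non-slidable parallelogram in $P$ with the same area.
   Context: $P$ is regarded as a compact set (boundary $\partial P$ plus interior); its edges are regarded as open segments (not containing their endpoints). A parallelogram lies in $P$ if all four corners lie in $P$. A parallelogram $A_0A_1A_2A_3$ lying in $P$ is locally maximal if there exists $\delta>0$ such that every parallelogram $B_0B_1B_2B_3$ lying in $P$ with $|A_iB_i|<\delta$ for all $i$ has area at most that of $A_0A_1A_2A_3$. A parallelogram is inscribed if all its corners lie on $\partial P$. It is slidable if two of its corners lie in the same (open) edge of $P$ (a corner in the interior of an edge and a corner at an endpoint of that edge do not count as lying in the same edge), and non-slidable otherwise. *)

theory Defs
  imports "HOL-Analysis.Analysis"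
begin

type_synonym pt = "real^2"

definition convex_polygon :: "pt set \<Rightarrow> bool" where
  "convex_polygon P \<longleftrightarrow> (\<exists>S. finite S \<and> P = convex hull S) \<and> interior P \<noteq> {}"

definition poly_edges :: "pt set \<Rightarrow> pt set set" where
  "poly_edges P = {open_segment a b | a b. a extreme_point_of P \<and> b extreme_point_of P
      \<and> a \<noteq> b \<and> closed_segment a b \<subseteq> frontier P}"

definition cross2 :: "pt \<Rightarrow> pt \<Rightarrow> real" where
  "cross2 v w = v$1 * w$2 - v$2 * w$1"

definition par_area :: "pt \<Rightarrow> pt \<Rightarrow> pt \<Rightarrow> pt \<Rightarrow> real" where
  "par_area a0 a1 a2 a3 = \<bar>cross2 (a1 - a0) (a3 - a0)\<bar>"

text \<open>A (non-degenerate) parallelogram A0 A1 A2 A3: diagonals bisect each other,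
  and the corners are not collinear.\<close>
definition is_parallelogram :: "pt \<Rightarrow> pt \<Rightarrow> pt \<Rightarrow> pt \<Rightarrow> bool" where
  "is_parallelogram a0 a1 a2 a3 \<longleftrightarrow> a0 + a2 = a1 + a3 \<and> par_area a0 a1 a2 a3 \<noteq> 0"

definition par_in :: "pt set \<Rightarrow> pt \<Rightarrow> pt \<Rightarrow> pt \<Rightarrow> pt \<Rightarrow> bool" where
  "par_in P a0 a1 a2 a3 \<longleftrightarrow> is_parallelogram a0 a1 a2 a3 \<and>
     a0 \<in> P \<and> a1 \<in> P \<and> a2 \<in> P \<and> a3 \<in> P"

definition locally_maximal :: "pt set \<Rightarrow> pt \<Rightarrow> pt \<Rightarrow> pt \<Rightarrow> pt \<Rightarrow> bool" where
  "locally_maximal P a0 a1 a2 a3 \<longleftrightarrow> par_in P a0 a1 a2 a3 \<and>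
     (\<exists>\<delta>>0. \<forall>b0 b1 b2 b3. par_in P b0 b1 b2 b3 \<and> dist a0 b0 < \<delta> \<and> dist a1 b1 < \<delta>
        \<and> dist a2 b2 < \<delta> \<and> dist a3 b3 < \<delta> \<longrightarrow> par_area b0 b1 b2 b3 \<le> par_area a0 a1 a2 a3)"

definition inscribed :: "pt set \<Rightarrow> pt \<Rightarrow> pt \<Rightarrow> pt \<Rightarrow> pt \<Rightarrow> bool" where
  "inscribed P a0 a1 a2 a3 \<longleftrightarrow> par_in P a0 a1 a2 a3 \<and>
     a0 \<in> frontier P \<and> a1 \<in> frontier P \<and> a2 \<in> frontier P \<and> a3 \<in> frontier P"

definition slidable :: "pt set \<Rightarrow> pt \<Rightarrow> pt \<Rightarrow> pt \<Rightarrow> pt \<Rightarrow> bool" where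
  "slidable P a0 a1 a2 a3 \<longleftrightarrow> (let A = [a0, a1, a2, a3] in
     \<exists>E\<in>poly_edges P. \<exists>i<4. \<exists>j<4. i \<noteq> j \<and> A ! i \<in> E \<and> A ! j \<in> E)"

end

theory Submission
  imports Defs
begin

lemma comp2: "(x::pt) = y \<longleftrightarrow> x$1 = y$1 \<and> x$2 = y$2"
  by (simp add: vec_eq_iff forall_2)

lemma inner2: "(x::pt) \<bullet> y = x$1*y$1 + x$2*y$2"
  by (simp add: inner_vec_def sum_2)

lemma area_shift:
  assumes "a0 + a2 = a1 + a3"
  shows "par_area a1 a2 a3 a0 = par_area a0 a1 a2 a3"
proof -
  have h: "a2 = a1 + a3 - a0" using assms by (metis add_diff_cancel_left')
  have "cross2 (a2 - a1) (a0 - a1) = cross2 (a1 - a0) (a3 - a0)"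
    unfolding h cross2_def by (simp add: algebra_simps)
  then show ?thesis unfolding par_area_def by simp
qed

lemma orth2:
  assumes "(a::pt) \<noteq> 0" "a \<bullet> x = 0" "a \<bullet> y = 0"
  shows "cross2 x y = 0"
proof -
  have e1: "a$1*x$1 = - (a$2*x$2)" "a$1*y$1 = - (a$2*y$2)" using assms(2,3) by (auto simp: inner2)
  have e2: "a$2*x$2 = - (a$1*x$1)" "a$2*y$2 = - (a$1*y$1)" using assms(2,3) by (auto simp: inner2)
  have "a$1 \<noteq> 0 \<or> a$2 \<noteq> 0" using assms(1) by (auto simp: comp2)
  moreover have f1: "a$1 * cross2 x y = (a$1*x$1)*y$2 - (a$1*y$1)*x$2"
    unfolding cross2_def by (simp add: algebra_simps)
  have f2: "a$2 * cross2 x y = x$1*(a$2*y$2) - y$1*(a$2*x$2)"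
    unfolding cross2_def by (simp add: algebra_simps)
  have "a$1 * cross2 x y = 0" using f1 unfolding e1 by (simp add: algebra_simps)
  moreover have "a$2 * cross2 x y = 0" using f2 unfolding e2 by (simp add: algebra_simps)
  ultimately show ?thesis by auto
qed

lemma par_shift: "par_in P a0 a1 a2 a3 \<Longrightarrow> par_in P a1 a2 a3 a0"
  unfolding par_in_def is_parallelogram_def using area_shift
  by (metis add.commute)

lemma insc_shift: "inscribed P a0 a1 a2 a3 \<Longrightarrow> inscribed P a1 a2 a3 a0"
  unfolding inscribed_def using par_shift by blast

lemma area_shift': "par_in P a0 a1 a2 a3 \<Longrightarrow> par_area a1 a2 a3 a0 = par_area a0 a1 a2 a3"
  unfolding par_in_def is_parallelogram_def using area_shift by blast

lemma lm_shift:
  assumes "locally_maximal P a0 a1 a2 a3"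
  shows "locally_maximal P a1 a2 a3 a0"
proof -
  from assms obtain d where d: "d > 0" and pa: "par_in P a0 a1 a2 a3"
    and H: "\<forall>b0 b1 b2 b3. par_in P b0 b1 b2 b3 \<and> dist a0 b0 < d \<and> dist a1 b1 < d
        \<and> dist a2 b2 < d \<and> dist a3 b3 < d \<longrightarrow> par_area b0 b1 b2 b3 \<le> par_area a0 a1 a2 a3"
    unfolding locally_maximal_def by blast
  have "par_area b0 b1 b2 b3 \<le> par_area a1 a2 a3 a0"
    if "par_in P b0 b1 b2 b3" "dist a1 b0 < d" "dist a2 b1 < d" "dist a3 b2 < d" "dist a0 b3 < d"
    for b0 b1 b2 b3
  proof -
    have p3: "par_in P b3 b0 b1 b2" using par_shift[OF par_shift[OF par_shift[OF that(1)]]] .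
    have "par_area b3 b0 b1 b2 \<le> par_area a0 a1 a2 a3" using H p3 that by blast
    moreover have "par_area b3 b0 b1 b2 = par_area b0 b1 b2 b3"
      using area_shift'[OF p3] area_shift'[OF par_shift[OF p3]] area_shift'[OF par_shift[OF par_shift[OF p3]]]
      by simp
    ultimately show ?thesis using area_shift'[OF pa] by simp
  qed
  then show ?thesis unfolding locally_maximal_def using d par_shift[OF pa] by blast
qed

lemma interior_not_lm:
  assumes cv: "convex P" and pa: "par_in P a0 a1 a2 a3" and int: "a0 \<in> interior P"
  shows "\<not> locally_maximal P a0 a1 a2 a3"
proof
  assume "locally_maximal P a0 a1 a2 a3"
  then obtain d where d: "d > 0"
    and H: "\<forall>b0 b1 b2 b3. par_in P b0 b1 b2 b3 \<and> dist a0 b0 < d \<and> dist a1 b1 < d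
        \<and> dist a2 b2 < d \<and> dist a3 b3 < d \<longrightarrow> par_area b0 b1 b2 b3 \<le> par_area a0 a1 a2 a3"
    unfolding locally_maximal_def by blast
  obtain e where e: "e > 0" "ball a0 e \<subseteq> P" using int by (meson mem_interior)
  define d1 where "d1 = a1 - a0"
  define d3 where "d3 = a3 - a0"
  define C where "C = cross2 d1 d3"
  have C0: "C \<noteq> 0" using pa unfolding par_in_def is_parallelogram_def par_area_def C_def d1_def d3_def by simp
  define r where "r = e / (2 * (norm d3 + 1))"
  have n1: "norm d3 + 1 > 0" using norm_ge_zero[of d3] by linarith
  have r0: "r > 0" unfolding r_def using e n1 by (intro divide_pos_pos) auto
  have "norm (r *\<^sub>R d3) < e"
  proof -
    have "norm (r *\<^sub>R d3) = r * norm d3" using r0 by simp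
    also have "\<dots> < r * (2*(norm d3 + 1))" using r0 n1 by (intro mult_strict_left_mono) auto
    also have "\<dots> = e" unfolding r_def using n1 by simp
    finally show ?thesis .
  qed
  define p where "p = a0 - r *\<^sub>R d3"
  have pP: "p \<in> P" using e \<open>norm (r *\<^sub>R d3) < e\<close> unfolding p_def by (auto simp: dist_norm)
  define q where "q = p - a1"
  define K where "K = norm q + 1"
  have K0: "K > 0" unfolding K_def using norm_ge_zero[of q] by linarith
  define m where "m = min 1 (min d e)"
  have m0: "m > 0" "m \<le> 1" "m \<le> d" "m \<le> e" unfolding m_def using d e by auto
  define t where "t = m / (2 * K)"
  have t0: "t > 0" unfolding t_def using m0 K0 by simp
  have tq: "norm (t *\<^sub>R q) < m"
  proof -
    have "norm (t *\<^sub>R q) = t * norm q" using t0 by simp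
    also have "\<dots> < t * (2 * K)" using t0 K0 unfolding K_def by (intro mult_strict_left_mono) auto
    also have "\<dots> = m" unfolding t_def using K0 by simp
    finally show ?thesis .
  qed
  have t1: "t \<le> 1"
  proof -
    have "t = m / (2*K)" by (simp add: t_def)
    moreover have "2 * K \<ge> 1" unfolding K_def by simp
    ultimately show ?thesis using m0 by (smt (verit) divide_le_eq_1)
  qed
  define b0 where "b0 = a0 + t *\<^sub>R q"
  define b1 where "b1 = a1 + t *\<^sub>R q"
  have b1P: "b1 \<in> P"
  proof -
    have "b1 = (1 - t) *\<^sub>R a1 + t *\<^sub>R p" unfolding b1_def q_def by (simp add: algebra_simps)
    moreover have "a1 \<in> P" using pa par_in_def by blast
    ultimately show ?thesis using cv pP t0 t1 unfolding convex_def by auto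
  qed
  have b0P: "b0 \<in> P" using e tq m0 unfolding b0_def by (auto simp: dist_norm)
  have para: "a0 + a2 = a1 + a3" using pa unfolding par_in_def is_parallelogram_def by simp
  have qexp: "q = - d1 - r *\<^sub>R d3" unfolding q_def p_def d1_def by simp
  have cr: "cross2 (b1 - b0) (a3 - b0) = C * (1 + t * r)"
  proof -
    have "b1 - b0 = d1" unfolding b1_def b0_def d1_def by simp
    moreover have "a3 - b0 = (1 + t * r) *\<^sub>R d3 + t *\<^sub>R d1"
      unfolding b0_def qexp d3_def by (simp add: algebra_simps)
    ultimately show ?thesis unfolding C_def cross2_def by (simp add: algebra_simps)
  qed
  have areab: "par_area b0 b1 a2 a3 = \<bar>C\<bar> * (1 + t * r)"
    unfolding par_area_def cr using t0 r0 by (simp add: abs_mult)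
  have areaa: "par_area a0 a1 a2 a3 = \<bar>C\<bar>" unfolding par_area_def C_def d1_def d3_def by simp
  have gt: "par_area b0 b1 a2 a3 > par_area a0 a1 a2 a3"
    unfolding areab areaa using C0 t0 r0 by (simp add: mult_pos_pos)
  have nz: "par_area b0 b1 a2 a3 \<noteq> 0" using gt areaa by simp
  have "b0 + a2 = b1 + a3" using para unfolding b0_def b1_def by (simp add: algebra_simps)
  then have pb: "par_in P b0 b1 a2 a3"
    unfolding par_in_def is_parallelogram_def using b0P b1P pa nz
    unfolding par_in_def by auto
  have "dist a0 b0 < d" "dist a1 b1 < d" using tq m0 unfolding b0_def b1_def by (auto simp: dist_norm)
  then have "par_area b0 b1 a2 a3 \<le> par_area a0 a1 a2 a3" using H pb d by auto
  then show False using gt by simp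
qed



lemma ex_less4: "(\<exists>i<(4::nat). P i) \<longleftrightarrow> P 0 \<or> P 1 \<or> P 2 \<or> P 3"
proof
  assume "\<exists>i<(4::nat). P i"
  then obtain i where "i < 4" "P i" by blast
  then have "i = 0 \<or> i = 1 \<or> i = 2 \<or> i = 3" by auto
  then show "P 0 \<or> P 1 \<or> P 2 \<or> P 3" using \<open>P i\<close> by auto
next
  assume "P 0 \<or> P 1 \<or> P 2 \<or> P 3"
  moreover have "(0::nat) < 4" "(1::nat) < 4" "(2::nat) < 4" "(3::nat) < 4" by simp_all
  ultimately show "\<exists>i<(4::nat). P i" by blast
qed

lemma slid_iff: "slidable P a0 a1 a2 a3 \<longleftrightarrow> (\<exists>E\<in>poly_edges P. (a0\<in>E\<and>a1\<in>E) \<or> (a0\<in>E\<and>a2\<in>E) \<or> (a0\<in>E\<and>a3\<in>E)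
   \<or> (a1\<in>E\<and>a2\<in>E) \<or> (a1\<in>E\<and>a3\<in>E) \<or> (a2\<in>E\<and>a3\<in>E))"
  unfolding slidable_def Let_def ex_less4 by (auto simp: numeral_eq_Suc)


lemma edge_support:
  assumes cv: "convex P" and cl: "closed P" and ni: "interior P \<noteq> {}" and E: "E \<in> poly_edges P"
  obtains a c u v where "(a::pt) \<noteq> 0" "\<forall>x\<in>P. c \<le> a \<bullet> x" "E = open_segment u v"
    "u extreme_point_of P" "v extreme_point_of P" "u \<noteq> v" "closed_segment u v \<subseteq> frontier P"
    "\<forall>x\<in>closed_segment u v. a \<bullet> x = c"
proof -
  obtain u v where uv: "E = open_segment u v" "u extreme_point_of P" "v extreme_point_of P" "u \<noteq> v"
    "closed_segment u v \<subseteq> frontier P" using E unfolding poly_edges_def by blast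
  define m where "m = midpoint u v"
  have mf: "m \<in> frontier P" using uv(5) midpoint_in_closed_segment unfolding m_def by blast
  have "m \<in> closure P" using mf by (simp add: frontier_def)
  moreover have "m \<notin> rel_interior P" using mf rel_interior_nonempty_interior[OF ni]
    by (simp add: frontier_def)
  ultimately obtain a where a0: "a \<noteq> 0" and ay: "\<And>y. y \<in> closure P \<Longrightarrow> a \<bullet> m \<le> a \<bullet> y"
    using supporting_hyperplane_relative_frontier[OF cv] by metis
  have aP: "\<forall>x\<in>P. a \<bullet> m \<le> a \<bullet> x" using ay closure_subset by blast
  have uP: "u \<in> P" "v \<in> P" using uv(2,3) extreme_point_of_def by auto
  have mid: "a \<bullet> m = (a \<bullet> u + a \<bullet> v) / 2" unfolding m_def midpoint_def
    by (simp add: inner_add_right)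
  have "a \<bullet> m \<le> a \<bullet> u" "a \<bullet> m \<le> a \<bullet> v" using aP uP by auto
  then have eu: "a \<bullet> u = a \<bullet> m \<and> a \<bullet> v = a \<bullet> m" using mid by argo
  have "\<forall>x\<in>closed_segment u v. a \<bullet> x = a \<bullet> m"
  proof
    fix x assume "x \<in> closed_segment u v"
    then obtain t where "x = (1 - t) *\<^sub>R u + t *\<^sub>R v" by (auto simp: in_segment)
    then have "a \<bullet> x = (1 - t) * (a \<bullet> u) + t * (a \<bullet> v)" by (simp add: inner_add_right)
    then show "a \<bullet> x = a \<bullet> m" using eu by (simp add: algebra_simps)
  qed
  then show ?thesis using that[OF a0 aP uv] by blast
qed

lemma on_line_edge:
  assumes aP: "\<forall>x\<in>P. c \<le> (a::pt) \<bullet> x" and E: "E \<in> poly_edges P"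
    and xE: "x \<in> E" and yE: "y \<in> E" and ax: "a \<bullet> x = c"
  shows "a \<bullet> y = c"
proof -
  obtain p q where pq: "E = open_segment p q" "p extreme_point_of P" "q extreme_point_of P"
    using E unfolding poly_edges_def by blast
  have pP: "p \<in> P" "q \<in> P" using pq extreme_point_of_def by auto
  have hp: "c \<le> a \<bullet> p" "c \<le> a \<bullet> q" using aP pP by auto
  obtain s where s: "0 < s" "s < 1" "x = (1 - s) *\<^sub>R p + s *\<^sub>R q"
    using xE pq(1) by (auto simp: in_segment)
  have "(1 - s) * (a \<bullet> p - c) + s * (a \<bullet> q - c) = 0"
    using ax s(3) by (simp add: inner_add_right algebra_simps)
  moreover have "(1 - s) * (a \<bullet> p - c) \<ge> 0" "s * (a \<bullet> q - c) \<ge> 0" using s hp by simp_all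
  ultimately have "(1 - s) * (a \<bullet> p - c) = 0" "s * (a \<bullet> q - c) = 0" by linarith+
  then have ep: "a \<bullet> p = c" "a \<bullet> q = c" using s by auto
  obtain r where "y = (1 - r) *\<^sub>R p + r *\<^sub>R q" using yE pq(1) by (auto simp: in_segment)
  then have "a \<bullet> y = (1 - r) * (a \<bullet> p) + r * (a \<bullet> q)" by (simp add: inner_add_right)
  then show ?thesis using ep by (simp add: algebra_simps)
qed

lemma extreme_not_edge:
  assumes "u extreme_point_of P" "E \<in> poly_edges P" shows "u \<notin> E"
proof -
  obtain p q where pq: "E = open_segment p q" "p extreme_point_of P" "q extreme_point_of P"
    using assms(2) unfolding poly_edges_def by blast
  have pP: "p \<in> P" "q \<in> P" using pq extreme_point_of_def by auto
  then show ?thesis using assms(1) pq(1) unfolding extreme_point_of_def by blast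
qed

lemma collinear_degenerate:
  assumes "(a::pt) \<noteq> 0" "a \<bullet> x0 = c" "a \<bullet> x1 = c" "a \<bullet> x3 = c"
  shows "par_area x0 x1 x2 x3 = 0"
proof -
  have "a \<bullet> (x1 - x0) = 0" "a \<bullet> (x3 - x0) = 0" using assms by (simp_all add: inner_diff_right)
  then show ?thesis unfolding par_area_def using orth2[OF assms(1)] by simp
qed

lemma cross_pair:
  assumes a0: "(a::pt) \<noteq> 0" and aP: "\<forall>x\<in>P. c \<le> a \<bullet> x" and h0: "a \<bullet> x0 = c" and h1: "a \<bullet> x1 = c"
    and par: "is_parallelogram x0 x1 x2 x3" and E: "E \<in> poly_edges P"
    and x: "x = x0 \<or> x = x1" and y: "y = x2 \<or> y = x3" and xE: "x \<in> E" and yE: "y \<in> E"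
  shows False
proof -
  have ax: "a \<bullet> x = c" using x h0 h1 by auto
  have ay: "a \<bullet> y = c" using on_line_edge[OF aP E xE yE ax] .
  have pe: "x0 + x2 = x1 + x3" using par unfolding is_parallelogram_def by simp
  have "a \<bullet> x0 + a \<bullet> x2 = a \<bullet> x1 + a \<bullet> x3"
    using arg_cong[OF pe, of "inner a"] by (simp add: inner_add_right)
  then have "a \<bullet> x3 = c" using y ay h0 h1 by auto
  then have "par_area x0 x1 x2 x3 = 0" using collinear_degenerate[OF a0 h0 h1] by blast
  then show False using par unfolding is_parallelogram_def by simp
qed


lemma cross_par: "cross2 (k *\<^sub>R w) (z + m *\<^sub>R w) = cross2 (k *\<^sub>R w) z"
  unfolding cross2_def by (simp add: algebra_simps)

lemma slide:
  assumes cv: "convex P" and cl: "closed P" and ni: "interior P \<noteq> {}"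
    and ins: "inscribed P a0 a1 a2 a3" and E: "E \<in> poly_edges P" and a0E: "a0 \<in> E" and a1E: "a1 \<in> E"
  shows "\<exists>b0 b1 a c. inscribed P b0 b1 a2 a3 \<and> par_area b0 b1 a2 a3 = par_area a0 a1 a2 a3
     \<and> (\<forall>E\<in>poly_edges P. \<not> (b0 \<in> E \<and> b1 \<in> E)) \<and> (a::pt) \<noteq> 0 \<and> (\<forall>x\<in>P. c \<le> a \<bullet> x)
     \<and> a \<bullet> b0 = c \<and> a \<bullet> b1 = c"
proof -
  obtain a c u v where a0: "(a::pt) \<noteq> 0" and aP: "\<forall>x\<in>P. c \<le> a \<bullet> x" and Euv: "E = open_segment u v"
    and ue: "u extreme_point_of P" and fr: "closed_segment u v \<subseteq> frontier P"
    and lin: "\<forall>x\<in>closed_segment u v. a \<bullet> x = c"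
    using edge_support[OF cv cl ni E] by metis
  obtain \<alpha> where al: "0 < \<alpha>" "\<alpha> < 1" "a0 = (1 - \<alpha>) *\<^sub>R u + \<alpha> *\<^sub>R v"
    using a0E Euv by (auto simp: in_segment)
  obtain \<beta> where be: "0 < \<beta>" "\<beta> < 1" "a1 = (1 - \<beta>) *\<^sub>R u + \<beta> *\<^sub>R v"
    using a1E Euv by (auto simp: in_segment)
  define \<mu> where "\<mu> = min \<alpha> \<beta>"
  define w where "w = v - u"
  define b0 where "b0 = a0 - \<mu> *\<^sub>R w"
  define b1 where "b1 = a1 - \<mu> *\<^sub>R w"
  have b0e: "b0 = (1 - (\<alpha> - \<mu>)) *\<^sub>R u + (\<alpha> - \<mu>) *\<^sub>R v"
    unfolding b0_def w_def al(3) by (simp add: algebra_simps)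
  have b1e: "b1 = (1 - (\<beta> - \<mu>)) *\<^sub>R u + (\<beta> - \<mu>) *\<^sub>R v"
    unfolding b1_def w_def be(3) by (simp add: algebra_simps)
  have b0s: "b0 \<in> closed_segment u v" unfolding in_segment b0e
    using al be by (intro exI[of _ "\<alpha> - \<mu>"]) (auto simp: \<mu>_def)
  have b1s: "b1 \<in> closed_segment u v" unfolding in_segment b1e
    using al be by (intro exI[of _ "\<beta> - \<mu>"]) (auto simp: \<mu>_def)
  have bu: "b0 = u \<or> b1 = u" unfolding b0e b1e \<mu>_def by (cases "\<alpha> \<le> \<beta>") auto
  have pa: "par_in P a0 a1 a2 a3" using ins inscribed_def by blast
  have para: "a0 + a2 = a1 + a3" using pa unfolding par_in_def is_parallelogram_def by simp
  have d1: "a1 - a0 = (\<beta> - \<alpha>) *\<^sub>R w" unfolding al(3) be(3) w_def by (simp add: algebra_simps)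
  have cr: "cross2 (b1 - b0) (a3 - b0) = cross2 (a1 - a0) (a3 - a0)"
  proof -
    have e1: "b1 - b0 = (\<beta> - \<alpha>) *\<^sub>R w" unfolding b0_def b1_def using d1 by (simp add: algebra_simps)
    have e2: "a3 - b0 = (a3 - a0) + \<mu> *\<^sub>R w" unfolding b0_def by simp
    have "cross2 (b1 - b0) (a3 - b0) = cross2 ((\<beta> - \<alpha>) *\<^sub>R w) ((a3 - a0) + \<mu> *\<^sub>R w)"
      by (simp only: e1 e2)
    also have "\<dots> = cross2 ((\<beta> - \<alpha>) *\<^sub>R w) (a3 - a0)" by (rule cross_par)
    finally show ?thesis using d1 by simp
  qed
  have area: "par_area b0 b1 a2 a3 = par_area a0 a1 a2 a3" unfolding par_area_def cr ..
  have "b0 + a2 = b1 + a3" using para unfolding b0_def b1_def by (simp add: algebra_simps)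
  moreover have "b0 \<in> frontier P" "b1 \<in> frontier P" using b0s b1s fr by auto
  moreover have "frontier P \<subseteq> P" using cl by (simp add: frontier_subset_closed)
  ultimately have insb: "inscribed P b0 b1 a2 a3" using ins area
    unfolding inscribed_def par_in_def is_parallelogram_def by auto
  have ne: "\<forall>E\<in>poly_edges P. \<not> (b0 \<in> E \<and> b1 \<in> E)" using bu extreme_not_edge[OF ue] by blast
  show ?thesis using insb area ne a0 aP lin b0s b1s by blast
qed

lemma opposite_impossible:
  assumes cv: "convex P" and cl: "closed P" and ni: "interior P \<noteq> {}"
    and pa: "par_in P a0 a1 a2 a3" and E: "E \<in> poly_edges P" and a0E: "a0 \<in> E" and a2E: "a2 \<in> E"
  shows False
proof -
  obtain a c u v where a0: "(a::pt) \<noteq> 0" and aP: "\<forall>x\<in>P. c \<le> a \<bullet> x" and Euv: "E = open_segment u v"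
    and lin: "\<forall>x\<in>closed_segment u v. a \<bullet> x = c"
    using edge_support[OF cv cl ni E] by metis
  have h0: "a \<bullet> a0 = c" "a \<bullet> a2 = c" using a0E a2E Euv lin open_closed_segment by blast+
  have h1: "c \<le> a \<bullet> a1" "c \<le> a \<bullet> a3" using pa aP par_in_def by auto
  have pe: "a0 + a2 = a1 + a3" using pa unfolding par_in_def is_parallelogram_def by simp
  have "a \<bullet> a0 + a \<bullet> a2 = a \<bullet> a1 + a \<bullet> a3"
    using arg_cong[OF pe, of "inner a"] by (simp add: inner_add_right)
  then have "a \<bullet> a1 = c" "a \<bullet> a3 = c" using h0 h1 by linarith+
  then have "par_area a0 a1 a2 a3 = 0" using collinear_degenerate[OF a0 h0(1)] by blast
  then show False using pa unfolding par_in_def is_parallelogram_def by simp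
qed

lemma core:
  assumes cv: "convex P" and cl: "closed P" and ni: "interior P \<noteq> {}"
    and ins: "inscribed P a0 a1 a2 a3" and E: "E \<in> poly_edges P" and a0E: "a0 \<in> E" and a1E: "a1 \<in> E"
  shows "\<exists>b0 b1 b2 b3. inscribed P b0 b1 b2 b3 \<and> \<not> slidable P b0 b1 b2 b3
            \<and> par_area b0 b1 b2 b3 = par_area a0 a1 a2 a3"
proof -
  obtain b0 b1 a c where insb: "inscribed P b0 b1 a2 a3" and ar: "par_area b0 b1 a2 a3 = par_area a0 a1 a2 a3"
    and ne: "\<forall>E\<in>poly_edges P. \<not> (b0 \<in> E \<and> b1 \<in> E)" and a0: "(a::pt) \<noteq> 0"
    and aP: "\<forall>x\<in>P. c \<le> a \<bullet> x" and h0: "a \<bullet> b0 = c" and h1: "a \<bullet> b1 = c"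
    using slide[OF cv cl ni ins E a0E a1E] by blast
  show ?thesis
  proof (cases "\<exists>E'\<in>poly_edges P. a2 \<in> E' \<and> a3 \<in> E'")
    case False
    have pb: "is_parallelogram b0 b1 a2 a3" using insb inscribed_def par_in_def by blast
    have "\<not> slidable P b0 b1 a2 a3"
      unfolding slid_iff using False ne cross_pair[OF a0 aP h0 h1 pb] by blast
    then show ?thesis using insb ar by blast
  next
    case True
    then obtain E' where E': "E' \<in> poly_edges P" "a2 \<in> E'" "a3 \<in> E'" by blast
    have ins2: "inscribed P a2 a3 b0 b1" using insc_shift[OF insc_shift[OF insb]] .
    obtain c2 c3 a' c' where insc: "inscribed P c2 c3 b0 b1"
      and ar2: "par_area c2 c3 b0 b1 = par_area a2 a3 b0 b1"
      and ne2: "\<forall>E\<in>poly_edges P. \<not> (c2 \<in> E \<and> c3 \<in> E)"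
      using slide[OF cv cl ni ins2 E'(1) E'(2,3)] by blast
    have insd: "inscribed P b0 b1 c2 c3" using insc_shift[OF insc_shift[OF insc]] .
    have pd: "is_parallelogram b0 b1 c2 c3" using insd inscribed_def par_in_def by blast
    have "\<not> slidable P b0 b1 c2 c3"
      unfolding slid_iff using ne ne2 cross_pair[OF a0 aP h0 h1 pd] by blast
    moreover have "par_area b0 b1 c2 c3 = par_area a0 a1 a2 a3"
    proof -
      have pb: "par_in P b0 b1 a2 a3" using insb inscribed_def by blast
      have pc: "par_in P c2 c3 b0 b1" using insc inscribed_def by blast
      have "par_area a2 a3 b0 b1 = par_area b0 b1 a2 a3"
        using area_shift'[OF pb] area_shift'[OF par_shift[OF pb]] by simp
      moreover have "par_area b0 b1 c2 c3 = par_area c2 c3 b0 b1"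
        using area_shift'[OF pc] area_shift'[OF par_shift[OF pc]] by simp
      ultimately show ?thesis using ar ar2 by simp
    qed
    ultimately show ?thesis using insd by blast
  qed
qed

theorem lemma2:
  assumes "convex_polygon P"
  shows "(\<forall>a0 a1 a2 a3. locally_maximal P a0 a1 a2 a3 \<longrightarrow> inscribed P a0 a1 a2 a3)
    \<and> (\<forall>a0 a1 a2 a3. inscribed P a0 a1 a2 a3 \<and> slidable P a0 a1 a2 a3 \<longrightarrow>
         (\<exists>b0 b1 b2 b3. inscribed P b0 b1 b2 b3 \<and> \<not> slidable P b0 b1 b2 b3
            \<and> par_area b0 b1 b2 b3 = par_area a0 a1 a2 a3))"
proof -
  obtain S where S: "finite S" "P = convex hull S" and ni: "interior P \<noteq> {}"
    using assms unfolding convex_polygon_def by blast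
  have cv: "convex P" using S by simp
  have cl: "closed P" using S by (simp add: compact_imp_closed compact_convex_hull finite_imp_compact)
  have intf: "x \<in> interior P" if "x \<in> P" "x \<notin> frontier P" for x
    using that cl by (simp add: frontier_def)
  have part1: "inscribed P a0 a1 a2 a3" if lm: "locally_maximal P a0 a1 a2 a3" for a0 a1 a2 a3
  proof -
    have pa: "par_in P a0 a1 a2 a3" using lm locally_maximal_def by blast
    have lm1: "locally_maximal P a1 a2 a3 a0" using lm_shift[OF lm] .
    have lm2: "locally_maximal P a2 a3 a0 a1" using lm_shift[OF lm1] .
    have lm3: "locally_maximal P a3 a0 a1 a2" using lm_shift[OF lm2] .
    have pa1: "par_in P a1 a2 a3 a0" using par_shift[OF pa] .
    have pa2: "par_in P a2 a3 a0 a1" using par_shift[OF pa1] .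
    have pa3: "par_in P a3 a0 a1 a2" using par_shift[OF pa2] .
    have "a0 \<in> frontier P" using interior_not_lm[OF cv pa] lm intf pa par_in_def by blast
    moreover have "a1 \<in> frontier P" using interior_not_lm[OF cv pa1] lm1 intf pa par_in_def by blast
    moreover have "a2 \<in> frontier P" using interior_not_lm[OF cv pa2] lm2 intf pa par_in_def by blast
    moreover have "a3 \<in> frontier P" using interior_not_lm[OF cv pa3] lm3 intf pa par_in_def by blast
    ultimately show ?thesis using pa inscribed_def by blast
  qed
  have part2: "\<exists>b0 b1 b2 b3. inscribed P b0 b1 b2 b3 \<and> \<not> slidable P b0 b1 b2 b3
            \<and> par_area b0 b1 b2 b3 = par_area a0 a1 a2 a3"
    if ins: "inscribed P a0 a1 a2 a3" and sl: "slidable P a0 a1 a2 a3" for a0 a1 a2 a3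
  proof -
    have pa: "par_in P a0 a1 a2 a3" using ins inscribed_def by blast
    have pa1: "par_in P a1 a2 a3 a0" using par_shift[OF pa] .
    have pa2: "par_in P a2 a3 a0 a1" using par_shift[OF pa1] .
    have ins1: "inscribed P a1 a2 a3 a0" using insc_shift[OF ins] .
    have ins2: "inscribed P a2 a3 a0 a1" using insc_shift[OF ins1] .
    have ins3: "inscribed P a3 a0 a1 a2" using insc_shift[OF ins2] .
    have ar1: "par_area a1 a2 a3 a0 = par_area a0 a1 a2 a3" using area_shift'[OF pa] .
    have ar2: "par_area a2 a3 a0 a1 = par_area a0 a1 a2 a3" using area_shift'[OF pa1] ar1 by simp
    have ar3: "par_area a3 a0 a1 a2 = par_area a0 a1 a2 a3" using area_shift'[OF pa2] ar2 by simp
    obtain E where E: "E \<in> poly_edges P" and cases: "(a0\<in>E\<and>a1\<in>E) \<or> (a0\<in>E\<and>a2\<in>E) \<or> (a0\<in>E\<and>a3\<in>E)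
      \<or> (a1\<in>E\<and>a2\<in>E) \<or> (a1\<in>E\<and>a3\<in>E) \<or> (a2\<in>E\<and>a3\<in>E)" using sl unfolding slid_iff by blast
    show ?thesis
    proof -
      { assume "a0\<in>E" "a1\<in>E" then have ?thesis using core[OF cv cl ni ins E] by blast }
      moreover
      { assume "a1\<in>E" "a2\<in>E" then have ?thesis using core[OF cv cl ni ins1 E] ar1 by metis }
      moreover
      { assume "a2\<in>E" "a3\<in>E" then have ?thesis using core[OF cv cl ni ins2 E] ar2 by metis }
      moreover
      { assume "a0\<in>E" "a3\<in>E" then have ?thesis using core[OF cv cl ni ins3 E] ar3 by metis }
      moreover
      { assume "a0\<in>E" "a2\<in>E" then have ?thesis using opposite_impossible[OF cv cl ni pa E] by blast }
      moreover
      { assume "a1\<in>E" "a3\<in>E" then have ?thesis using opposite_impossible[OF cv cl ni pa1 E] by blast }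
      ultimately show ?thesis using cases by blast
    qed
  qed
  show ?thesis using part1 part2 by blast
qed

end
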